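(* Let $0\le d\le N$ be integers. If $d=0$ or $d=N$ then $\dim\Lambda_{N,d}=0$; otherwise $\dim\Lambda_{N,d}=(d-1)(N-d-1)$.
   Context: For integers $0\le d\le N$, $\Lambda_{N,d}\subseteq\mathbb{R}^{d\times(N+1)}$ denotes the set of real matrices $\lambda=(\lambda_{i,n})$, with rows indexed by $1\le i\le d$ and columns indexed by $0\le n\le N$, satisfying: $\lambda_{i,0}=0$ for $1\le i\le d$; $\lambda_{i,N}=N$ for $1\le i\le d$; $\sum_{i=1}^d\lambda_{i,n}=dn$ for $0\le n\le N$; $\lambda_{i,n}\le\lambda_{i,n+1}$ for $1\le i\le d$, $0\le n<N$; $\lambda_{i,n}\le\lambda_{i-1,n-1}$ for $1<i\le d$, $0<n\le N$. (For $d=0$ this is the single empty $0\times(N+1)$ matrix.) The dimension of a polytope is the dimension of its affine hull. *)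

theory Defs
  imports "HOL-Analysis.Analysis" "HOL-Library.Function_Algebras"
begin

text \<open>Real d x (N+1) matrices are encoded as functions on index pairs (i,n)
  (row i, column n), required to vanish outside the index range
  1 \<le> i \<le> d, 0 \<le> n \<le> N, so that the space is canonically R^(d(N+1)).\<close>

type_synonym mat = "nat \<times> nat \<Rightarrow> real"

definition mscale :: "real \<Rightarrow> mat \<Rightarrow> mat" where
  "mscale c f = (\<lambda>p. c * f p)"

definition Lambda :: "nat \<Rightarrow> nat \<Rightarrow> mat set" where
  "Lambda N d = {l.
     (\<forall>i n. \<not> (1 \<le> i \<and> i \<le> d \<and> n \<le> N) \<longrightarrow> l (i, n) = 0) \<and>
     (\<forall>i. 1 \<le> i \<and> i \<le> d \<longrightarrow> l (i, 0) = 0) \<and>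
     (\<forall>i. 1 \<le> i \<and> i \<le> d \<longrightarrow> l (i, N) = real N) \<and>
     (\<forall>n \<le> N. (\<Sum>i=1..d. l (i, n)) = real d * real n) \<and>
     (\<forall>i n. 1 \<le> i \<and> i \<le> d \<and> n < N \<longrightarrow> l (i, n) \<le> l (i, Suc n)) \<and>
     (\<forall>i n. 1 < i \<and> i \<le> d \<and> 0 < n \<and> n \<le> N \<longrightarrow> l (i, n) \<le> l (i - 1, n - 1))}"

definition affine_dim :: "mat set \<Rightarrow> int" where
  "affine_dim S = (if S = {} then -1
     else int (vector_space.dim mscale ((\<lambda>x. x - (SOME a. a \<in> S)) ` S)))"

end

theory Submission
  imports Defs
begin


interpretation M: vector_space mscale
  by unfold_locales (auto simp: mscale_def fun_eq_iff algebra_simps)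

lemma sum_fun_apply: "(\<Sum>g\<in>A. f g) p = (\<Sum>g\<in>A. (f g p :: real))"
  by (induction A rule: infinite_finite_induct) auto

lemma Lam_mono_chain:
  assumes "l \<in> Lambda N d" "1 \<le> i" "i \<le> d" "m \<le> n" "n \<le> N"
  shows "l (i,m) \<le> l (i,n)"
  using assms(4,5)
proof (induction n)
  case 0 thus ?case by simp
next
  case (Suc n)
  show ?case
  proof (cases "m = Suc n")
    case True thus ?thesis by simp
  next
    case False
    hence "m \<le> n" using Suc by simp
    with Suc have "l(i,m) \<le> l(i,n)" by simp
    also have "l(i,n) \<le> l(i,Suc n)" using assms(1,2,3) Suc.prems unfolding Lambda_def by auto
    finally show ?thesis .
  qed
qed

lemma Lam_diag_chain:
  assumes "l \<in> Lambda N d" "1 \<le> i" "i + k \<le> d" "n + k \<le> N"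
  shows "l (i+k, n+k) \<le> l (i, n)"
  using assms(3,4)
proof (induction k)
  case 0 thus ?case by simp
next
  case (Suc k)
  have D: "\<forall>i n. 1 < i \<and> i \<le> d \<and> 0 < n \<and> n \<le> N \<longrightarrow> l (i, n) \<le> l (i - 1, n - 1)"
    using assms(1) unfolding Lambda_def by blast
  have "l (i+Suc k, n + Suc k) \<le> l (i+Suc k - 1, n+Suc k - 1)"
    using D[rule_format, of "i+Suc k" "n+Suc k"] Suc.prems assms(2) by auto
  also have "\<dots> = l (i+k,n+k)" by simp
  also have "\<dots> \<le> l (i,n)" using Suc by simp
  finally show ?case .
qed

lemma Lam_zero:
  assumes "l \<in> Lambda N d" "1 \<le> i" "i \<le> d" "n \<le> N" "n < i"
  shows "l (i,n) = 0"
proof -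
  have "l ((i-n)+n, 0+n) \<le> l (i-n, 0)"
    by (rule Lam_diag_chain[OF assms(1)]) (use assms in auto)
  moreover have "l (i-n,0) = 0" using assms unfolding Lambda_def by auto
  moreover have "l (i,0) \<le> l (i,n)" by (rule Lam_mono_chain[OF assms(1-3)]) (use assms in auto)
  moreover have "l (i,0) = 0" using assms unfolding Lambda_def by auto
  ultimately show ?thesis using assms by simp
qed

lemma Lam_N:
  assumes "l \<in> Lambda N d" "1 \<le> i" "i \<le> d" "n \<le> N" "N + i \<le> n + d"
  shows "l (i,n) = real N"
proof -
  have "l (i+(N-n), n+(N-n)) \<le> l (i, n)"
    by (rule Lam_diag_chain[OF assms(1)]) (use assms in auto)
  moreover have "l (i+(N-n), N) = N"
  proof -
    have "1 \<le> i+(N-n)" "i+(N-n) \<le> d" using assms by auto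
    thus ?thesis using assms(1) unfolding Lambda_def by blast
  qed
  moreover have "l (i,n) \<le> l (i,N)" by (rule Lam_mono_chain[OF assms(1-3)]) (use assms in auto)
  moreover have "l (i,N) = N" using assms unfolding Lambda_def by auto
  ultimately show ?thesis using assms by simp
qed

definition rr :: "nat \<Rightarrow> nat \<Rightarrow> nat \<Rightarrow> nat \<Rightarrow> real" where
  "rr N d i n = min 1 (real (d+1-i) / real (N-n))"

fun pp :: "nat \<Rightarrow> nat \<Rightarrow> nat \<Rightarrow> nat \<Rightarrow> real" where
  "pp N d i 0 = (if i = 0 then real N else 0)"
| "pp N d i (Suc n) = (if i = 0 then real N else pp N d i n + rr N d i n * (pp N d (i-1) n - pp N d i n))"

lemma rr_nonneg: "0 \<le> rr N d i n" by (simp add: rr_def)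
lemma rr_le1: "rr N d i n \<le> 1" by (simp add: rr_def)

lemma pp0: "pp N d 0 n = real N" by (cases n) auto

lemma pp_dec: "1 \<le> i \<Longrightarrow> pp N d i n \<le> pp N d (i-1) n"
proof (induction n arbitrary: i)
  case 0 thus ?case by auto
next
  case (Suc n)
  have mono: "pp N d j n \<le> pp N d j (Suc n)" for j
  proof (cases "j = 0")
    case True thus ?thesis by (simp add: pp0)
  next
    case False
    hence "0 \<le> pp N d (j-1) n - pp N d j n" using Suc.IH[of j] by simp
    hence "0 \<le> rr N d j n * (pp N d (j-1) n - pp N d j n)" using rr_nonneg by simp
    thus ?thesis using False by simp
  qed
  have "pp N d i (Suc n) \<le> pp N d (i-1) n"
  proof -
    have g: "0 \<le> pp N d (i-1) n - pp N d i n" using Suc by simp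
    have "rr N d i n * (pp N d (i-1) n - pp N d i n) \<le> 1 * (pp N d (i-1) n - pp N d i n)"
      by (rule mult_right_mono[OF rr_le1 g])
    thus ?thesis using Suc.prems by simp
  qed
  also have "\<dots> \<le> pp N d (i-1) (Suc n)" by (rule mono)
  finally show ?case .
qed

lemma pp_mono: "pp N d i n \<le> pp N d i (Suc n)"
proof (cases "i = 0")
  case True thus ?thesis by (simp add: pp0)
next
  case False
  hence "0 \<le> pp N d (i-1) n - pp N d i n" using pp_dec[of i] by simp
  hence "0 \<le> rr N d i n * (pp N d (i-1) n - pp N d i n)" using rr_nonneg by simp
  thus ?thesis using False by simp
qed

lemma pp_diag: "1 \<le> i \<Longrightarrow> pp N d i (Suc n) \<le> pp N d (i-1) n"
proof -
  assume i: "1 \<le> i"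
  have g: "0 \<le> pp N d (i-1) n - pp N d i n" using pp_dec[OF i] by simp
  have "rr N d i n * (pp N d (i-1) n - pp N d i n) \<le> 1 * (pp N d (i-1) n - pp N d i n)"
    by (rule mult_right_mono[OF rr_le1 g])
  thus ?thesis using i by simp
qed

lemma pp_zero: "1 \<le> i \<Longrightarrow> n < i \<Longrightarrow> pp N d i n = 0"
proof (induction n arbitrary: i)
  case 0 thus ?case by simp
next
  case (Suc n)
  have "pp N d i n = 0" using Suc by simp
  moreover have "pp N d (i-1) n = 0" using Suc.IH[of "i-1"] Suc.prems by simp
  ultimately show ?case using Suc.prems by simp
qed

lemma pp_N: "i + N \<le> n + d \<Longrightarrow> n \<le> N \<Longrightarrow> d \<le> N \<Longrightarrow> pp N d i n = real N"
proof (induction n arbitrary: i)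
  case 0 thus ?case by simp
next
  case (Suc n)
  show ?case
  proof (cases "i = 0")
    case True thus ?thesis by simp
  next
    case i0: False
    show ?thesis
    proof (cases "i + N \<le> n + d")
      case True
      hence "pp N d i n = N" "pp N d (i-1) n = N" using Suc by auto
      thus ?thesis using i0 by simp
    next
      case False
      hence e: "d + 1 - i = N - n" "N - n > 0" using Suc.prems i0 by auto
      have "rr N d i n = 1" unfolding rr_def using e by simp
      moreover have "pp N d (i-1) n = N" using Suc.IH[of "i-1"] Suc.prems False i0 by auto
      ultimately show ?thesis using i0 by simp
    qed
  qed
qed




lemma tel2: "(\<Sum>i=1..(k::nat). (f (i-1) - f i)) = f 0 - (f k :: real)"
  by (induction k) (auto simp: sum.cl_ivl_Suc)

lemma rr_lt1: "d + 1 - i < N - n \<Longrightarrow> rr N d i n < 1"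
proof -
  assume a: "d + 1 - i < N - n"
  hence "real (d+1-i) < real (N-n)" by linarith
  moreover have "0 < real (N-n)" using a by simp
  ultimately have "real (d+1-i) / real (N-n) < 1" by simp
  thus ?thesis unfolding rr_def by simp
qed

lemma rr_pos: "i \<le> d \<Longrightarrow> n < N \<Longrightarrow> 0 < rr N d i n"
  unfolding rr_def by simp

lemma telesc: "(\<Sum>i=1..(k::nat). real (k+1-i) * (f (i-1) - f i)) = real k * f 0 - (\<Sum>i=1..k. (f i :: real))"
proof (induction k)
  case 0 thus ?case by simp
next
  case (Suc k)
  have "(\<Sum>i=1..Suc k. real (Suc k+1-i) * (f (i-1) - f i))
     = (\<Sum>i=1..Suc k. real (k+1-i) * (f (i-1) - f i) + (f (i-1) - f i))"
    by (rule sum.cong) (auto simp: Suc_diff_le algebra_simps)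
  also have "\<dots> = (\<Sum>i=1..Suc k. real (k+1-i) * (f (i-1) - f i)) + (f 0 - f (Suc k))"
    by (simp only: sum.distrib tel2)
  also have "(\<Sum>i=1..Suc k. real (k+1-i) * (f (i-1) - f i)) = (\<Sum>i=1..k. real (k+1-i) * (f (i-1) - f i))"
    by (simp add: sum.cl_ivl_Suc)
  finally have C: "(\<Sum>i=1..Suc k. real (Suc k+1-i) * (f (i-1) - f i)) = (\<Sum>i=1..k. real (k+1-i) * (f (i-1) - f i)) + (f 0 - f (Suc k))" .
  show ?case unfolding C Suc.IH by (simp add: sum.cl_ivl_Suc algebra_simps)
qed

lemma pp_colsum: "d \<le> N \<Longrightarrow> n \<le> N \<Longrightarrow> (\<Sum>i=1..d. pp N d i n) = real d * real n"
proof (induction n)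
  case 0 thus ?case by simp
next
  case (Suc n)
  have nN: "n < N" using Suc by simp
  have "(\<Sum>i=1..d. pp N d i (Suc n)) = (\<Sum>i=1..d. pp N d i n + rr N d i n * (pp N d (i-1) n - pp N d i n))"
    by (rule sum.cong) auto
  also have "\<dots> = (\<Sum>i=1..d. pp N d i n) + (\<Sum>i=1..d. rr N d i n * (pp N d (i-1) n - pp N d i n))"
    by (simp add: sum.distrib)
  also have "(\<Sum>i=1..d. rr N d i n * (pp N d (i-1) n - pp N d i n))
     = (\<Sum>i=1..d. (1 / real (N-n)) * (real (d+1-i) * (pp N d (i-1) n - pp N d i n)))"
  proof (rule sum.cong)
    fix i assume i: "i \<in> {1..d}"
    show "rr N d i n * (pp N d (i-1) n - pp N d i n) = (1 / real (N-n)) * (real (d+1-i) * (pp N d (i-1) n - pp N d i n))"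
    proof (cases "real (d+1-i) / real (N-n) \<le> 1")
      case True thus ?thesis unfolding rr_def by simp
    next
      case False
      hence "d + 1 - i > N - n" using nN by (simp add: field_simps)
      hence "i + N \<le> n + d" using i nN by auto
      hence "pp N d i n = N" "pp N d (i-1) n = N" using pp_N[of _ N n d] Suc.prems by auto
      thus ?thesis by simp
    qed
  qed simp
  also have "\<dots> = (1 / real (N-n)) * (\<Sum>i=1..d. (real (d+1-i) * (pp N d (i-1) n - pp N d i n)))"
    by (rule sum_distrib_left[symmetric])
  also have "\<dots> = (1 / real (N-n)) * (real d * real N - real d * real n)"
    unfolding telesc[of d "\<lambda>i. pp N d i n"] using Suc by (simp add: pp0)
  also have "\<dots> = real d" using nN by (simp add: field_simps of_nat_diff)
  finally show ?case using Suc by (simp add: algebra_simps)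
qed

lemma pp_gap: "1 \<le> i \<Longrightarrow> i \<le> d \<Longrightarrow> i \<le> n+1 \<Longrightarrow> n + d < N + i \<Longrightarrow> pp N d i n < pp N d (i-1) n"
proof (induction n arbitrary: i)
  case 0
  hence "i = 1" "N \<ge> 1" by auto
  thus ?case by simp
next
  case (Suc n)
  have nN: "n < N" using Suc.prems by simp
  show ?case
  proof (cases "i = 1")
    case True
    have r: "rr N d 1 n < 1" by (rule rr_lt1) (use Suc.prems True in auto)
    have g: "pp N d 1 n < N" using Suc.IH[of 1] Suc.prems True by (simp add: pp0)
    have "pp N d 1 (Suc n) = pp N d 1 n + rr N d 1 n * (N - pp N d 1 n)" by (simp add: pp0)
    moreover have "rr N d 1 n * (N - pp N d 1 n) < 1 * (N - pp N d 1 n)"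
      by (rule mult_strict_right_mono[OF r]) (use g in simp)
    ultimately show ?thesis using True by (simp add: pp0)
  next
    case False
    then obtain j where ij: "i = Suc (Suc j)" using Suc.prems by (cases i; cases "i - 1") auto
    have e1: "pp N d (Suc j) (Suc n) = pp N d (Suc j) n + rr N d (Suc j) n * (pp N d j n - pp N d (Suc j) n)"
      by simp
    have e2: "pp N d i (Suc n) = pp N d i n + rr N d i n * (pp N d (Suc j) n - pp N d i n)"
      using ij by simp
    have w1: "0 \<le> pp N d j n - pp N d (Suc j) n" using pp_dec[of "Suc j" N d n] by simp
    have w2: "0 \<le> pp N d (Suc j) n - pp N d i n" using pp_dec[of i N d n] ij by simp
    have ra: "0 \<le> rr N d (Suc j) n" "0 \<le> 1 - rr N d i n" using rr_nonneg rr_le1 by auto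
    have diff: "pp N d (Suc j) (Suc n) - pp N d i (Suc n)
       = rr N d (Suc j) n * (pp N d j n - pp N d (Suc j) n) + (1 - rr N d i n) * (pp N d (Suc j) n - pp N d i n)"
      unfolding e1 e2 by (simp add: algebra_simps)
    have goal: "pp N d i (Suc n) < pp N d (Suc j) (Suc n)"
    proof (cases "i \<le> n + 1")
      case True
      have r: "rr N d i n < 1" by (rule rr_lt1) (use Suc.prems in auto)
      have g: "0 < pp N d (Suc j) n - pp N d i n" using Suc.IH[of i] Suc.prems True ij by simp
      have "0 < (1 - rr N d i n) * (pp N d (Suc j) n - pp N d i n)" using r g by simp
      moreover have "0 \<le> rr N d (Suc j) n * (pp N d j n - pp N d (Suc j) n)" using ra w1 by simp
      ultimately show ?thesis using diff by linarith
    next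
      case False
      have r: "0 < rr N d (Suc j) n" by (rule rr_pos) (use Suc.prems nN ij in auto)
      have g: "0 < pp N d j n - pp N d (Suc j) n" using Suc.IH[of "Suc j"] Suc.prems False ij
        by simp
      have "0 < rr N d (Suc j) n * (pp N d j n - pp N d (Suc j) n)" using r g by simp
      moreover have "0 \<le> (1 - rr N d i n) * (pp N d (Suc j) n - pp N d i n)" using ra w2 by simp
      ultimately show ?thesis using diff by linarith
    qed
    thus ?thesis using ij by simp
  qed
qed

lemma pp_mono_strict: "1 \<le> i \<Longrightarrow> i \<le> d \<Longrightarrow> i \<le> n+1 \<Longrightarrow> n + d < N + i \<Longrightarrow> pp N d i n < pp N d i (Suc n)"
proof -
  assume a: "1 \<le> i" "i \<le> d" "i \<le> n+1" "n + d < N + i"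
  have r: "0 < rr N d i n" by (rule rr_pos) (use a in auto)
  have g: "0 < pp N d (i-1) n - pp N d i n" using pp_gap[OF a] by simp
  have "0 < rr N d i n * (pp N d (i-1) n - pp N d i n)" using r g by simp
  thus ?thesis using a by simp
qed

lemma pp_diag_strict: "2 \<le> i \<Longrightarrow> i \<le> d \<Longrightarrow> 1 \<le> n \<Longrightarrow> i \<le> n \<Longrightarrow> n + d < N + i \<Longrightarrow> pp N d i n < pp N d (i-1) (n-1)"
proof -
  assume a: "2 \<le> i" "i \<le> d" "1 \<le> n" "i \<le> n" "n + d < N + i"
  then obtain m where m: "n = Suc m" by (cases n) auto
  have r: "rr N d i m < 1" by (rule rr_lt1) (use a m in auto)
  have g: "0 < pp N d (i-1) m - pp N d i m" using pp_gap[of i d m N] a m by simp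
  have "pp N d i n = pp N d i m + rr N d i m * (pp N d (i-1) m - pp N d i m)" using a m by simp
  also have "\<dots> < pp N d i m + 1 * (pp N d (i-1) m - pp N d i m)"
    using mult_strict_right_mono[OF r g] by simp
  finally show ?thesis using m by simp
qed




definition FF :: "nat \<Rightarrow> nat \<Rightarrow> (nat \<times> nat) set" where
  "FF N d = {(i,n). 1 \<le> i \<and> i \<le> d \<and> i \<le> n \<and> n + d < N + i}"

definition PP :: "nat \<Rightarrow> nat \<Rightarrow> mat" where
  "PP N d = (\<lambda>(i,n). if 1 \<le> i \<and> i \<le> d \<and> n \<le> N then pp N d i n else 0)"

lemma pp_diag': "1 \<le> i \<Longrightarrow> 1 \<le> n \<Longrightarrow> pp N d i n \<le> pp N d (i-1) (n-1)"
  using pp_diag[of i N d "n-1"] by simp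

lemma PP_in: assumes dN: "d \<le> N" shows "PP N d \<in> Lambda N d"
  unfolding Lambda_def mem_Collect_eq
proof (intro conjI allI impI)
  fix i n assume "\<not> (1 \<le> i \<and> i \<le> d \<and> n \<le> N)"
  thus "PP N d (i,n) = 0" by (auto simp: PP_def)
next
  fix i :: nat assume "1 \<le> i \<and> i \<le> d"
  thus "PP N d (i,0) = 0" by (simp add: PP_def pp_zero)
next
  fix i :: nat assume "1 \<le> i \<and> i \<le> d"
  thus "PP N d (i,N) = real N" using pp_N[of i N N d] dN by (simp add: PP_def)
next
  fix n assume n: "n \<le> N"
  have "(\<Sum>i=1..d. PP N d (i,n)) = (\<Sum>i=1..d. pp N d i n)"
    by (rule sum.cong) (use n in \<open>auto simp: PP_def\<close>)
  thus "(\<Sum>i=1..d. PP N d (i,n)) = real d * real n" using pp_colsum[OF dN n] by simp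
next
  fix i n assume a: "1 \<le> i \<and> i \<le> d \<and> n < N"
  thus "PP N d (i,n) \<le> PP N d (i, Suc n)" using pp_mono[of N d i n] by (simp add: PP_def)
next
  fix i n assume a: "1 < i \<and> i \<le> d \<and> 0 < n \<and> n \<le> N"
  thus "PP N d (i,n) \<le> PP N d (i-1, n-1)" using pp_diag'[of i n N d] by (auto simp: PP_def)
qed

lemma finite_pos_lb: "finite A \<Longrightarrow> (\<forall>a\<in>A. 0 < f a) \<Longrightarrow> \<exists>\<delta>>0. \<forall>a\<in>A. \<delta> \<le> (f a::real)"
proof (induction A rule: finite_induct)
  case empty show ?case by (rule exI[of _ "1::real"]) simp
next
  case (insert a A)
  then obtain \<delta> where "\<delta> > 0" "\<forall>a\<in>A. \<delta> \<le> f a" by auto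
  thus ?case using insert.prems by (intro exI[of _ "min \<delta> (f a)"]) auto
qed

lemma interior:
  assumes dN: "d \<le> N" and xF: "\<forall>p. p \<notin> FF N d \<longrightarrow> x p = 0"
    and xs: "\<forall>n. (\<Sum>i=1..d. x (i,n)) = 0" and xb: "\<forall>p. \<bar>x p\<bar> \<le> 1"
  shows "\<exists>\<epsilon>>0. PP N d + mscale \<epsilon> x \<in> Lambda N d"
proof -
  let ?I1 = "{(i,n). 1 \<le> i \<and> i \<le> d \<and> i \<le> n+1 \<and> n + d < N + i}"
  let ?I2 = "{(i,n). 2 \<le> i \<and> i \<le> d \<and> 1 \<le> n \<and> i \<le> n \<and> n + d < N + i}"
  have f1: "finite ?I1" by (rule finite_subset[of _ "{..d} \<times> {..N}"]) auto
  have f2: "finite ?I2" by (rule finite_subset[of _ "{..d} \<times> {..N}"]) auto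
  obtain \<delta>1 where d1: "\<delta>1 > 0" "\<forall>a\<in>?I1. \<delta>1 \<le> (\<lambda>(i,n). pp N d i (Suc n) - pp N d i n) a"
    using finite_pos_lb[OF f1, of "\<lambda>(i,n). pp N d i (Suc n) - pp N d i n"] pp_mono_strict by fastforce
  obtain \<delta>2 where d2: "\<delta>2 > 0" "\<forall>a\<in>?I2. \<delta>2 \<le> (\<lambda>(i,n). pp N d (i-1) (n-1) - pp N d i n) a"
    using finite_pos_lb[OF f2, of "\<lambda>(i,n). pp N d (i-1) (n-1) - pp N d i n"] pp_diag_strict by fastforce
  define \<epsilon> where "\<epsilon> = min \<delta>1 \<delta>2 / 2"
  have ep: "\<epsilon> > 0" "2 * \<epsilon> \<le> \<delta>1" "2 * \<epsilon> \<le> \<delta>2" using d1 d2 by (auto simp: \<epsilon>_def)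
  have xe: "\<bar>\<epsilon> * x p\<bar> \<le> \<epsilon>" for p
  proof -
    have a: "\<bar>\<epsilon> * x p\<bar> = \<epsilon> * \<bar>x p\<bar>" using ep by (simp add: abs_mult)
    have "\<bar>x p\<bar> \<le> 1" using xb by blast
    hence "\<epsilon> * \<bar>x p\<bar> \<le> \<epsilon> * 1" by (rule mult_left_mono) (use ep in auto)
    thus ?thesis using a by simp
  qed
  have eq: "PP N d + mscale \<epsilon> x = (\<lambda>p. PP N d p + \<epsilon> * x p)" by (simp add: fun_eq_iff mscale_def)
  have xout: "x (i,n) = 0" if "\<not> (1 \<le> i \<and> i \<le> d \<and> n < N)" for i n
    using xF that by (auto simp: FF_def)
  have "(\<lambda>p. PP N d p + \<epsilon> * x p) \<in> Lambda N d"
    unfolding Lambda_def mem_Collect_eq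
  proof (intro conjI allI impI)
    fix i n assume "\<not> (1 \<le> i \<and> i \<le> d \<and> n \<le> N)"
    thus "PP N d (i,n) + \<epsilon> * x (i,n) = 0" using xout[of i n] by (auto simp: PP_def)
  next
    fix i :: nat assume "1 \<le> i \<and> i \<le> d"
    moreover have "x (i,0) = 0" using xF by (auto simp: FF_def)
    ultimately show "PP N d (i,0) + \<epsilon> * x (i,0) = 0" by (simp add: PP_def pp_zero)
  next
    fix i :: nat assume "1 \<le> i \<and> i \<le> d"
    moreover have "x (i,N) = 0" using xout by auto
    ultimately show "PP N d (i,N) + \<epsilon> * x (i,N) = real N" using pp_N[of i N N d] dN by (simp add: PP_def)
  next
    fix n assume n: "n \<le> N"
    have "(\<Sum>i=1..d. PP N d (i,n) + \<epsilon> * x (i,n)) = (\<Sum>i=1..d. pp N d i n) + \<epsilon> * (\<Sum>i=1..d. x (i,n))"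
      by (simp add: sum.distrib sum_distrib_left PP_def n)
    thus "(\<Sum>i=1..d. PP N d (i,n) + \<epsilon> * x (i,n)) = real d * real n" using pp_colsum[OF dN n] xs by simp
  next
    fix i n assume a: "1 \<le> i \<and> i \<le> d \<and> n < N"
    have P: "PP N d (i,n) = pp N d i n" "PP N d (i,Suc n) = pp N d i (Suc n)" using a by (auto simp: PP_def)
    show "PP N d (i,n) + \<epsilon> * x (i,n) \<le> PP N d (i, Suc n) + \<epsilon> * x (i, Suc n)"
    proof (cases "(i,n) \<in> FF N d \<or> (i,Suc n) \<in> FF N d")
      case True
      hence "(i,n) \<in> ?I1" using a by (auto simp: FF_def)
      hence "\<delta>1 \<le> pp N d i (Suc n) - pp N d i n" using d1 by auto
      thus ?thesis using P ep xe[of "(i,n)"] xe[of "(i,Suc n)"] by linarith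
    next
      case False
      thus ?thesis using P xF pp_mono[of N d i n] by auto
    qed
  next
    fix i n assume a: "1 < i \<and> i \<le> d \<and> 0 < n \<and> n \<le> N"
    have P: "PP N d (i,n) = pp N d i n" "PP N d (i-1,n-1) = pp N d (i-1) (n-1)" using a by (auto simp: PP_def)
    show "PP N d (i,n) + \<epsilon> * x (i,n) \<le> PP N d (i-1, n-1) + \<epsilon> * x (i-1, n-1)"
    proof (cases "(i,n) \<in> FF N d \<or> (i-1,n-1) \<in> FF N d")
      case True
      hence "(i,n) \<in> ?I2" using a by (auto simp: FF_def)
      hence "\<delta>2 \<le> pp N d (i-1) (n-1) - pp N d i n" using d2 by auto
      thus ?thesis using P ep xe[of "(i,n)"] xe[of "(i-1,n-1)"] by linarith
    next
      case False
      thus ?thesis using P xF pp_diag'[of i n N d] a by auto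
    qed
  qed
  thus ?thesis using ep eq by auto
qed




definition mm :: "nat \<Rightarrow> nat \<Rightarrow> nat \<Rightarrow> nat" where
  "mm N d n = max 1 (n + d + 1 - N)"

definition GG :: "nat \<Rightarrow> nat \<Rightarrow> (nat \<times> nat) set" where
  "GG N d = {(i,n). 2 \<le> i \<and> i \<le> d \<and> i \<le> n \<and> n + d + 1 < N + i}"

definition bb :: "nat \<Rightarrow> nat \<Rightarrow> nat \<times> nat \<Rightarrow> mat" where
  "bb N d g = (\<lambda>p. (if p = g then 1 else 0) - (if p = (mm N d (snd g), snd g) then 1 else 0))"

lemma GG_mm: "(i,n) \<in> GG N d \<Longrightarrow> mm N d n < i"
  by (auto simp: GG_def mm_def)

lemma GG_FF: "(i,n) \<in> GG N d \<Longrightarrow> (i,n) \<in> FF N d"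
  by (auto simp: GG_def FF_def)

lemma GG_mmFF: "(i,n) \<in> GG N d \<Longrightarrow> (mm N d n, n) \<in> FF N d"
  by (auto simp: GG_def FF_def mm_def)

lemma FF_notGG: "(i,n) \<in> FF N d \<Longrightarrow> (i,n) \<notin> GG N d \<Longrightarrow> i = mm N d n"
  by (auto simp: GG_def FF_def mm_def)

lemma finite_GG: "finite (GG N d)"
  by (rule finite_subset[of _ "{..d} \<times> {..N+d}"]) (auto simp: GG_def)

lemma bb_GG: "g \<in> GG N d \<Longrightarrow> p \<in> GG N d \<Longrightarrow> bb N d g p = (if g = p then 1 else 0)"
  using GG_mm[of "fst p" "snd p" N d] by (cases p) (auto simp: bb_def)

lemma bb_inj: "inj_on (bb N d) (GG N d)"
proof (rule inj_onI)
  fix g h assume g: "g \<in> GG N d" and h: "h \<in> GG N d" and e: "bb N d g = bb N d h"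
  have "bb N d g h = bb N d h h" using e by simp
  thus "g = h" using bb_GG[OF g h] bb_GG[OF h h] by (auto split: if_splits)
qed

lemma indep: "M.independent (bb N d ` GG N d)"
proof (rule M.independent_if_scalars_zero)
  show "finite (bb N d ` GG N d)" using finite_GG by simp
next
  fix f v assume s0: "(\<Sum>x\<in>bb N d ` GG N d. mscale (f x) x) = 0" and v: "v \<in> bb N d ` GG N d"
  then obtain g0 where g0: "g0 \<in> GG N d" "v = bb N d g0" by auto
  have "0 = (\<Sum>x\<in>bb N d ` GG N d. mscale (f x) x) g0" using s0 by simp
  also have "\<dots> = (\<Sum>x\<in>bb N d ` GG N d. f x * x g0)" by (simp add: sum_fun_apply mscale_def)
  also have "\<dots> = (\<Sum>x\<in>bb N d ` GG N d. if x = v then f x else 0)"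
  proof (rule sum.cong)
    fix x assume "x \<in> bb N d ` GG N d"
    then obtain g where g: "g \<in> GG N d" "x = bb N d g" by auto
    have "x = v \<longleftrightarrow> g = g0" using bb_inj[of N d] g g0 by (auto dest: inj_onD)
    thus "f x * x g0 = (if x = v then f x else 0)" using bb_GG[OF g(1) g0(1)] g by auto
  qed simp
  also have "\<dots> = f v" using v finite_GG by simp
  finally show "f v = 0" by simp
qed

lemma card_GG: "card (GG N d) = (d - 1) * (N - d - 1)"
proof -
  have e: "GG N d = (\<lambda>(i,k). (i, k+i)) ` ({2..d} \<times> {..<N-d-1})"
  proof (intro set_eqI iffI)
    fix p assume "p \<in> GG N d"
    then obtain i n where p: "p = (i,n)" "2 \<le> i" "i \<le> d" "i \<le> n" "n + d + 1 < N + i" by (auto simp: GG_def)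
    hence "(i, n - i) \<in> {2..d} \<times> {..<N-d-1}" "p = (\<lambda>(i,k). (i, k+i)) (i, n-i)" by auto
    thus "p \<in> (\<lambda>(i,k). (i, k+i)) ` ({2..d} \<times> {..<N-d-1})" by blast
  next
    fix p assume "p \<in> (\<lambda>(i,k). (i, k+i)) ` ({2..d} \<times> {..<N-d-1})"
    thus "p \<in> GG N d" by (auto simp: GG_def)
  qed
  have "inj_on (\<lambda>(i,k). (i, k+i)) ({2..d} \<times> {..<N-d-1})" by (auto simp: inj_on_def)
  hence "card (GG N d) = card ({2..d} \<times> {..<N-d-1})" unfolding e by (rule card_image)
  also have "\<dots> = (d - 1) * (N - d - 1)" by (simp add: card_cartesian_product)
  finally show ?thesis .
qed

lemma col_sum_bb: assumes g: "g \<in> GG N d" shows "(\<Sum>i=1..d. bb N d g (i,n)) = 0"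
proof -
  obtain i0 n0 where g0: "g = (i0,n0)" by (cases g)
  have r: "1 \<le> i0" "i0 \<le> d" "1 \<le> mm N d n0" "mm N d n0 \<le> d"
    using g GG_mm[of i0 n0 N d] by (auto simp: g0 GG_def mm_def)
  show ?thesis
  proof (cases "n = n0")
    case True
    have "(\<Sum>i=1..d. bb N d g (i,n)) = (\<Sum>i=1..d. (if i = i0 then 1 else 0) - (if i = mm N d n0 then 1 else 0))"
      by (rule sum.cong) (auto simp: bb_def g0 True)
    also have "\<dots> = 0" using r by (simp add: sum_subtractf)
    finally show ?thesis .
  next
    case False
    thus ?thesis by (simp add: bb_def g0)
  qed
qed

lemma expand:
  fixes x :: mat
  assumes xF: "\<forall>p. p \<notin> FF N d \<longrightarrow> x p = 0" and xs: "\<forall>n. (\<Sum>i=1..d. x (i,n)) = 0"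
  shows "x = (\<Sum>g\<in>GG N d. mscale (x g) (bb N d g))"
proof (rule ext)
  fix p :: "nat \<times> nat"
  obtain i n where p: "p = (i,n)" by (cases p)
  have R: "(\<Sum>g\<in>GG N d. mscale (x g) (bb N d g)) p = (\<Sum>g\<in>GG N d. x g * bb N d g p)"
    by (simp add: sum_fun_apply mscale_def)
  show "x p = (\<Sum>g\<in>GG N d. mscale (x g) (bb N d g)) p"
  proof (cases "p \<in> GG N d")
    case True
    have "(\<Sum>g\<in>GG N d. x g * bb N d g p) = (\<Sum>g\<in>GG N d. if g = p then x g else 0)"
      by (rule sum.cong) (auto simp: bb_GG[OF _ True])
    also have "\<dots> = x p" using True finite_GG by simp
    finally show ?thesis using R by simp
  next
    case notG: False
    have bn: "bb N d g p = - (if p = (mm N d (snd g), snd g) then 1 else 0)" if "g \<in> GG N d" for g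
      using notG that by (auto simp: bb_def)
    show ?thesis
    proof (cases "i = mm N d n")
      case False
      have "(\<Sum>g\<in>GG N d. x g * bb N d g p) = 0"
        by (rule sum.neutral) (use bn p False in auto)
      moreover have "x p = 0" using xF FF_notGG[of i n N d] notG False p by auto
      ultimately show ?thesis using R by simp
    next
      case im: True
      define Gn where "Gn = {j. (j,n) \<in> GG N d}"
      have fGn: "finite Gn" unfolding Gn_def
        by (rule finite_subset[of _ "{..d}"]) (auto simp: GG_def)
      have "(\<Sum>g\<in>GG N d. x g * bb N d g p) = (\<Sum>g\<in>GG N d. - (if snd g = n then x g else 0))"
        by (rule sum.cong) (use bn p im in auto)
      also have "\<dots> = - (\<Sum>g\<in>{g\<in>GG N d. snd g = n}. x g)"
        by (simp add: sum_negf sum.inter_filter finite_GG)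
      also have "{g\<in>GG N d. snd g = n} = (\<lambda>j. (j,n)) ` Gn" by (auto simp: Gn_def)
      also have "(\<Sum>g\<in>(\<lambda>j. (j,n)) ` Gn. x g) = (\<Sum>j\<in>Gn. x (j,n))"
        by (subst sum.reindex) (auto simp: inj_on_def)
      finally have S: "(\<Sum>g\<in>GG N d. x g * bb N d g p) = - (\<Sum>j\<in>Gn. x (j,n))" .
      have "0 = (\<Sum>j=1..d. x (j,n))" using xs by simp
      also have "\<dots> = (\<Sum>j=1..d. (if j = mm N d n then x (j,n) else 0) + (if j \<in> Gn then x (j,n) else 0))"
      proof (rule sum.cong)
        fix j assume j: "j \<in> {1..d}"
        show "x (j,n) = (if j = mm N d n then x (j,n) else 0) + (if j \<in> Gn then x (j,n) else 0)"
        proof (cases "j = mm N d n")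
          case True thus ?thesis using GG_mm[of j n N d] by (auto simp: Gn_def)
        next
          case False
          show ?thesis using False FF_notGG[of j n N d] xF by (auto simp: Gn_def)
        qed
      qed simp
      also have "\<dots> = (\<Sum>j=1..d. (if j = mm N d n then x (j,n) else 0)) + (\<Sum>j=1..d. (if j \<in> Gn then x (j,n) else 0))"
        by (rule sum.distrib)
      also have "(\<Sum>j=1..d. (if j = mm N d n then x (j,n) else 0)) = x (mm N d n, n)"
      proof (cases "mm N d n \<le> d")
        case True
        moreover have "1 \<le> mm N d n" by (simp add: mm_def)
        ultimately show ?thesis by simp
      next
        case False
        hence "(mm N d n, n) \<notin> FF N d" by (auto simp: FF_def)
        thus ?thesis using xF False by simp
      qed
      also have "(\<Sum>j=1..d. (if j \<in> Gn then x (j,n) else 0)) = (\<Sum>j\<in>{1..d} \<inter> Gn. x (j,n))"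
        by (simp add: sum.inter_restrict)
      also have "{1..d} \<inter> Gn = Gn" by (auto simp: Gn_def GG_def)
      finally have "x (mm N d n, n) = - (\<Sum>j\<in>Gn. x (j,n))" by simp
      thus ?thesis using R S p im by simp
    qed
  qed
qed




lemma Lam_diff_props:
  assumes l: "l \<in> Lambda N d" and a: "a \<in> Lambda N d"
  shows "\<forall>p. p \<notin> FF N d \<longrightarrow> (l - a) p = 0" "\<forall>n. (\<Sum>i=1..d. (l - a) (i,n)) = 0"
proof -
  show "\<forall>p. p \<notin> FF N d \<longrightarrow> (l - a) p = 0"
  proof (intro allI impI)
    fix p :: "nat \<times> nat" assume p: "p \<notin> FF N d"
    obtain i n where pe: "p = (i,n)" by (cases p)
    show "(l - a) p = 0"
    proof (cases "1 \<le> i \<and> i \<le> d \<and> n \<le> N")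
      case False
      thus ?thesis using l a pe unfolding Lambda_def by auto
    next
      case True
      hence "n < i \<or> N + i \<le> n + d" using p pe by (auto simp: FF_def)
      thus ?thesis
      proof
        assume "n < i" thus ?thesis using Lam_zero[OF l, of i n] Lam_zero[OF a, of i n] True pe by simp
      next
        assume "N + i \<le> n + d" thus ?thesis using Lam_N[OF l, of i n] Lam_N[OF a, of i n] True pe by simp
      qed
    qed
  qed
  show "\<forall>n. (\<Sum>i=1..d. (l - a) (i,n)) = 0"
  proof
    fix n
    show "(\<Sum>i=1..d. (l - a) (i,n)) = 0"
    proof (cases "n \<le> N")
      case True
      have "(\<Sum>i=1..d. (l - a) (i,n)) = (\<Sum>i=1..d. l (i,n)) - (\<Sum>i=1..d. a (i,n))"
        by (simp add: sum_subtractf)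
      thus ?thesis using l a True unfolding Lambda_def by simp
    next
      case False
      thus ?thesis using l a unfolding Lambda_def by simp
    qed
  qed
qed

theorem theorem3p2:
  fixes N d :: nat
  assumes "d \<le> N"
  shows "affine_dim (Lambda N d) =
           (if d = 0 \<or> d = N then 0 else (int d - 1) * (int N - int d - 1))"
proof -
  let ?L = "Lambda N d"
  define a where "a = (SOME a. a \<in> ?L)"
  define V where "V = (\<lambda>x. x - a) ` ?L"
  define B where "B = bb N d ` GG N d"
  have P: "PP N d \<in> ?L" by (rule PP_in[OF assms])
  hence ne: "?L \<noteq> {}" by auto
  have aL: "a \<in> ?L" unfolding a_def using P by (metis someI)
  have BV: "B \<subseteq> M.span V"
  proof
    fix v assume "v \<in> B"
    then obtain g where g: "g \<in> GG N d" "v = bb N d g" by (auto simp: B_def)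
    have xF: "\<forall>p. p \<notin> FF N d \<longrightarrow> bb N d g p = 0"
      using g GG_FF[of "fst g" "snd g" N d] GG_mmFF[of "fst g" "snd g" N d] by (auto simp: bb_def)
    have xs: "\<forall>n. (\<Sum>i=1..d. bb N d g (i,n)) = 0" using col_sum_bb[OF g(1)] by blast
    have xb: "\<forall>p. \<bar>bb N d g p\<bar> \<le> 1"
      using GG_mm[of "fst g" "snd g" N d] g by (auto simp: bb_def)
    obtain \<epsilon> where ep: "\<epsilon> > 0" "PP N d + mscale \<epsilon> (bb N d g) \<in> ?L"
      using interior[OF assms xF xs xb] by blast
    have s1: "(PP N d + mscale \<epsilon> (bb N d g)) - a \<in> M.span V"
      using ep by (auto simp: V_def intro!: M.span_base)
    have s2: "PP N d - a \<in> M.span V"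
      using P by (auto simp: V_def intro!: M.span_base)
    have "mscale (1/\<epsilon>) (((PP N d + mscale \<epsilon> (bb N d g)) - a) - (PP N d - a)) \<in> M.span V"
      by (rule M.span_scale[OF M.span_diff[OF s1 s2]])
    moreover have "mscale (1/\<epsilon>) (((PP N d + mscale \<epsilon> (bb N d g)) - a) - (PP N d - a)) = bb N d g"
      using ep by (simp add: fun_eq_iff mscale_def)
    ultimately show "v \<in> M.span V" using g by simp
  qed
  have VB: "V \<subseteq> M.span B"
  proof
    fix v assume "v \<in> V"
    then obtain l where l: "l \<in> ?L" "v = l - a" by (auto simp: V_def)
    have e: "v = (\<Sum>g\<in>GG N d. mscale (v g) (bb N d g))"
      unfolding l(2) by (rule expand[OF Lam_diff_props[OF l(1) aL]])
    have "(\<Sum>g\<in>GG N d. mscale (v g) (bb N d g)) \<in> M.span B"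
      by (intro M.span_sum M.span_scale M.span_base) (auto simp: B_def)
    thus "v \<in> M.span B" using e by simp
  qed
  have sVB: "M.span V \<subseteq> M.span B" by (rule M.span_minimal[OF VB M.subspace_span])
  have "M.dim (M.span V) = card B"
    by (rule M.dim_unique[OF BV sVB]) (auto simp: B_def indep)
  hence dV: "M.dim V = (d - 1) * (N - d - 1)"
    using card_image[OF bb_inj[of N d]] card_GG[of N d] by (simp add: B_def)
  have "affine_dim ?L = int (M.dim V)"
    unfolding affine_dim_def V_def a_def using ne by simp
  also have "\<dots> = (if d = 0 \<or> d = N then 0 else (int d - 1) * (int N - int d - 1))"
    using assms unfolding dV by (auto simp: of_nat_diff)
  finally show ?thesis .
qed


end
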